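(* Let $n\geq2$ and $\sigma>0$. For $b>0$ let $C^1_0([b,\infty))$ be the Banach space of $C^1$ functions $v:[b,\infty)\to\mathbb{R}$ with $v(x)\to0$ and $v'(x)\to0$ as $x\to+\infty$, with norm $\|v\|_{C^1}=\sup_{[b,\infty)}|v|+\sup_{[b,\infty)}|v'|$, and let $$Y_{\sigma,b}=\Big\{v\in C^1_0([b,\infty)) : v(x)>0,\ |v'(x)|<\frac{4(n-1)}{\sigma x^2}\ \text{for all }x\geq b\Big\}.$$ Define for $v\in Y_{\sigma,b}$ and $x\geq b$ $$[T_\sigma v](x)=2(n-1)x\int_x^\infty\frac{1}{t^2}\bigg\{\int_t^\infty\frac{1+(v'(s)+\sigma)^2}{v(s)+\sigma s}\,\frac{s}{2}\,e^{-\int_t^s\frac{z}{2}(1+(v'(z)+\sigma)^2)\,dz}\,ds\bigg\}dt.$$ Then there exists $b_0=b_0(n,\sigma)$ such that for every $b\geq b_0$, $T_\sigma$ is a contraction on $Y_{\sigma,b}$ for the norm $\|\cdot\|_{C^1}$, i.e. there is $\tau\in(0,1)$ with $\|T_\sigma v_2-T_\sigma v_1\|_{C^1}\leq\tau\|v_2-v_1\|_{C^1}$ for all $v_1,v_2\in Y_{\sigma,b}$. *)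

theory Defs
  imports "HOL-Analysis.Analysis"
begin

definition dv :: "real \<Rightarrow> (real \<Rightarrow> real) \<Rightarrow> real \<Rightarrow> real" where
  "dv b v x = vector_derivative v (at x within {b..})"

definition C1_0 :: "real \<Rightarrow> (real \<Rightarrow> real) \<Rightarrow> bool" where
  "C1_0 b v \<longleftrightarrow> (\<forall>x\<ge>b. v differentiable (at x within {b..}))
      \<and> continuous_on {b..} (dv b v)
      \<and> (v \<longlongrightarrow> 0) at_top \<and> (dv b v \<longlongrightarrow> 0) at_top"

definition c1norm :: "real \<Rightarrow> (real \<Rightarrow> real) \<Rightarrow> real" where
  "c1norm b v = (SUP x\<in>{b..}. \<bar>v x\<bar>) + (SUP x\<in>{b..}. \<bar>dv b v x\<bar>)"

definition Yset :: "nat \<Rightarrow> real \<Rightarrow> real \<Rightarrow> (real \<Rightarrow> real) set" where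
  "Yset n \<sigma> b = {v. C1_0 b v \<and> (\<forall>x\<ge>b. v x > 0 \<and>
       \<bar>dv b v x\<bar> < 4 * (real n - 1) / (\<sigma> * x\<^sup>2))}"

definition Top :: "nat \<Rightarrow> real \<Rightarrow> real \<Rightarrow> (real \<Rightarrow> real) \<Rightarrow> real \<Rightarrow> real" where
  "Top n \<sigma> b v x = 2 * (real n - 1) * x *
     integral {x..} (\<lambda>t. (1 / t\<^sup>2) *
       integral {t..} (\<lambda>s. (1 + (dv b v s + \<sigma>)\<^sup>2) / (v s + \<sigma> * s) * (s / 2) *
          exp (- integral {t..s} (\<lambda>z. z / 2 * (1 + (dv b v z + \<sigma>)\<^sup>2)))))"

end

theory Submission
  imports Defs "HOL-Real_Asymp.Real_Asymp"
begin


lemma int_bound_Ici: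
  fixes f g :: "real \<Rightarrow> real"
  assumes "continuous_on {t..} f" "g integrable_on {t..}" "\<And>x. x \<ge> t \<Longrightarrow> \<bar>f x\<bar> \<le> g x"
  shows "f integrable_on {t..}"
  apply (rule measurable_bounded_by_integrable_imp_integrable[OF _ assms(2)])
  using assms by (auto intro!: continuous_imp_measurable_on_sets_lebesgue)

lemma gauss1:
  fixes t :: real assumes t: "t \<ge> 0"
  shows "((\<lambda>s. s * exp (-(s^2-t^2)/4)) has_integral 2) {t..}"
proof (rule has_integral_to_inf)
  show "(\<lambda>s. s * exp (-(s^2-t^2)/4)) integrable_on {t..y}" for y
    by (intro integrable_continuous_interval continuous_intros) auto
  have *: "((\<lambda>s. s * exp (-(s^2-t^2)/4)) has_integral (-2*exp (-(y^2-t^2)/4) - (-2*exp (-(t^2-t^2)/4)))) {t..y}"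
    if "y \<ge> t" for y
    using that
    apply (intro fundamental_theorem_of_calculus)
     apply simp
    apply (simp flip: has_real_derivative_iff_has_vector_derivative)
    apply (rule derivative_eq_intros refl | simp)+
    apply (simp add: field_simps)?
    done
  have "\<forall>\<^sub>F y in at_top. integral {t..y} (\<lambda>s. s * exp (-(s^2-t^2)/4)) = (-2*exp (-(y^2-t^2)/4) - (-2*exp (-(t^2-t^2)/4)))"
    unfolding eventually_at_top_linorder using * integral_unique by blast
  moreover have "((\<lambda>y::real. (-2*exp (-(y^2-t^2)/4) - (-2*exp (-(t^2-t^2)/4)))) \<longlongrightarrow> 2) at_top"
    by real_asymp
  ultimately show "((\<lambda>y. integral {t..y} (\<lambda>s. s * exp (-(s^2-t^2)/4))) \<longlongrightarrow> 2) at_top"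
    by (simp add: filterlim_cong tendsto_cong)
qed (use t in auto)

lemma gauss2:
  fixes t :: real assumes t: "t \<ge> 0"
  shows "((\<lambda>s. s * (s^2-t^2) * exp (-(s^2-t^2)/4)) has_integral 8) {t..}"
proof (rule has_integral_to_inf)
  show "(\<lambda>s. s * (s^2-t^2) * exp (-(s^2-t^2)/4)) integrable_on {t..y}" for y
    by (intro integrable_continuous_interval continuous_intros) auto
  have *: "((\<lambda>s. s * (s^2-t^2) * exp (-(s^2-t^2)/4)) has_integral
      (-(2*(y^2-t^2)+8)*exp (-(y^2-t^2)/4) - (-(2*(t^2-t^2)+8)*exp (-(t^2-t^2)/4)))) {t..y}"
    if "y \<ge> t" for y
    using that
    apply (intro fundamental_theorem_of_calculus)
     apply simp
    apply (simp flip: has_real_derivative_iff_has_vector_derivative)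
    apply (rule derivative_eq_intros refl | simp)+
    apply (simp add: field_simps)?
    done
  have "\<forall>\<^sub>F y in at_top. integral {t..y} (\<lambda>s. s * (s^2-t^2) * exp (-(s^2-t^2)/4)) = (-(2*(y^2-t^2)+8)*exp (-(y^2-t^2)/4) - (-(2*(t^2-t^2)+8)*exp (-(t^2-t^2)/4)))"
    unfolding eventually_at_top_linorder using * integral_unique by blast
  moreover have "((\<lambda>y::real. (-(2*(y^2-t^2)+8)*exp (-(y^2-t^2)/4) - (-(2*(t^2-t^2)+8)*exp (-(t^2-t^2)/4)))) \<longlongrightarrow> 8) at_top"
    by real_asymp
  ultimately show "((\<lambda>y. integral {t..y} (\<lambda>s. s * (s^2-t^2) * exp (-(s^2-t^2)/4))) \<longlongrightarrow> 8) at_top"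
    by (simp add: filterlim_cong tendsto_cong)
next
  fix y assume "y \<ge> t" then show "0 \<le> y * (y^2-t^2) * exp (-(y^2-t^2)/4)" 
    using t by (intro mult_nonneg_nonneg) (auto intro!: power_mono)
qed



lemma at_within_Ici_eq: "x \<ge> (b::real) \<Longrightarrow> at x within {b..} = at x within {b..x+1}"
  by (rule at_within_nhd[where S="{x-1<..<x+1}"]) auto

lemma split_Ici:
  fixes G :: "real \<Rightarrow> real"
  assumes "G integrable_on {b..}" "G integrable_on {x..}" "x \<ge> b"
  shows "integral {x..} G = integral {b..} G - integral {b..x} G"
proof -
  have i1: "G integrable_on {b..x}" 
    by (rule integrable_on_subinterval[OF assms(1)]) auto
  have "(G has_integral (integral {b..x} G + integral {x..} G)) ({b..x} \<union> {x..})"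
  proof (rule has_integral_Un)
    show "(G has_integral integral {b..x} G) {b..x}" using i1 by (rule integrable_integral)
    show "(G has_integral integral {x..} G) {x..}" using assms(2) by (rule integrable_integral)
    show "negligible ({b..x} \<inter> {x..})" by (rule negligible_subset[of "{x}"]) auto
  qed
  moreover have "{b..x} \<union> {x..} = {b..}" using assms(3) by auto
  ultimately have "integral {b..} G = integral {b..x} G + integral {x..} G"
    by (metis integral_unique)
  then show ?thesis by simp
qed

lemma outer:
  fixes G :: "real \<Rightarrow> real" and b B :: real
  assumes b: "b > 0" and G: "continuous_on {b..} G" and GB: "\<And>t. t \<ge> b \<Longrightarrow> \<bar>G t\<bar> \<le> B / t^3"
  shows outer_int: "\<And>x. x \<ge> b \<Longrightarrow> G integrable_on {x..}"
    and outer_bound: "\<And>x. x \<ge> b \<Longrightarrow> \<bar>integral {x..} G\<bar> \<le> B / (2*x^2)"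
    and outer_deriv: "\<And>x. x \<ge> b \<Longrightarrow> ((\<lambda>x. integral {x..} G) has_real_derivative (- G x)) (at x within {b..})"
    and outer_cont: "continuous_on {b..} (\<lambda>x. integral {x..} G)"
proof -
  have maj: "((\<lambda>t. B * (1 / t^3)) has_integral B * (1/(2*x^2))) {x..}" if "x \<ge> b" for x
    using has_integral_inverse_power_to_inf[of 3 x] that b
    by (intro has_integral_mult_right) (simp add: numeral_eq_Suc)
  show int: "G integrable_on {x..}" if "x \<ge> b" for x
  proof (rule int_bound_Ici)
    show "continuous_on {x..} G" by (rule continuous_on_subset[OF G]) (use that in auto)
    show "(\<lambda>t. B * (1 / t^3)) integrable_on {x..}" using maj[OF that] by blast
    show "\<bar>G t\<bar> \<le> B * (1 / t ^ 3)" if "x \<le> t" for t using GB[of t] that \<open>x \<ge> b\<close> by simp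
  qed
  show bnd: "\<bar>integral {x..} G\<bar> \<le> B / (2*x^2)" if "x \<ge> b" for x
  proof -
    have "norm (integral {x..} G) \<le> integral {x..} (\<lambda>t. B * (1 / t^3))"
      apply (rule integral_norm_bound_integral[OF int[OF that]])
      using maj[OF that] GB that by auto
    also have "\<dots> = B / (2*x^2)" using maj[OF that] integral_unique by simp
    finally show ?thesis by simp
  qed
  have split: "integral {x..} G = integral {b..} G - integral {b..x} G" if "x \<ge> b" for x
    using int[of b] int[OF that] that b by (intro split_Ici) auto
  show der: "((\<lambda>x. integral {x..} G) has_real_derivative (- G x)) (at x within {b..})" if "x \<ge> b" for x
  proof -
    have "((\<lambda>y. integral {b..} G - integral {b..y} G) has_real_derivative (- G x)) (at x within {b..x+1})"
      apply (rule derivative_eq_intros refl)+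
       apply (rule integral_has_real_derivative)
      using that apply (auto intro: continuous_on_subset[OF G])
      done
    then have "((\<lambda>y. integral {b..} G - integral {b..y} G) has_real_derivative (- G x)) (at x within {b..})"
      using at_within_Ici_eq[OF that] by simp
    then show ?thesis
      by (rule has_field_derivative_transform_within[OF _ zero_less_one]) (use that in \<open>auto intro: split[symmetric]\<close>)
  qed
  show "continuous_on {b..} (\<lambda>x. integral {x..} G)"
    using der by (auto simp: continuous_on_eq_continuous_within intro: DERIV_continuous)
qed



lemma at_Ici_neq_bot: "x \<ge> (b::real) \<Longrightarrow> at x within {b..} \<noteq> bot"
proof
  assume x: "x \<ge> b" and "at x within {b..} = bot"
  moreover have "at x within {x<..} \<le> at x within {b..}" using x by (intro at_le) auto
  ultimately show False by (simp add: bot_unique)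
qed

lemma indef_cont:
  fixes h :: "real \<Rightarrow> real"
  assumes "continuous_on {b..} h"
  shows "continuous_on {b..} (\<lambda>x. integral {b..x} h)"
proof -
  have "((\<lambda>y. integral {b..y} h) has_real_derivative h x) (at x within {b..})" if "x \<ge> b" for x
  proof -
    have "((\<lambda>y. integral {b..y} h) has_real_derivative h x) (at x within {b..x+1})"
      by (rule integral_has_real_derivative) (use that in \<open>auto intro: continuous_on_subset[OF assms]\<close>)
    then show ?thesis using at_within_Ici_eq[OF that] by simp
  qed
  then show ?thesis by (auto simp: continuous_on_eq_continuous_within intro: DERIV_continuous)
qed

lemma bounded_Ici:
  fixes u :: "real \<Rightarrow> real"
  assumes "continuous_on {b..} u" "(u \<longlongrightarrow> 0) at_top"
  shows "\<exists>B. \<forall>x\<ge>b. \<bar>u x\<bar> \<le> B"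
proof -
  from assms(2) have "eventually (\<lambda>x. \<bar>u x\<bar> < 1) at_top"
    using order_tendstoD(2)[OF tendsto_rabs[OF assms(2)], of 1] by simp
  then obtain N where N: "\<And>x. x \<ge> N \<Longrightarrow> \<bar>u x\<bar> < 1" by (auto simp: eventually_at_top_linorder)
  have "compact (u ` {b..max b N})"
    by (rule compact_continuous_image) (auto intro: continuous_on_subset[OF assms(1)])
  then obtain B where B: "\<And>y. y \<in> u ` {b..max b N} \<Longrightarrow> norm y \<le> B"
    by (meson bounded_iff compact_imp_bounded)
  show ?thesis
  proof (intro exI[of _ "max B 1"] allI impI)
    fix x assume "x \<ge> b"
    show "\<bar>u x\<bar> \<le> max B 1"
    proof (cases "x \<le> max b N")
      case True then show ?thesis using B[of "u x"] \<open>x \<ge> b\<close> by force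
    next
      case False then have "\<bar>u x\<bar> < 1" using N[of x] by auto
      then show ?thesis by (simp add: le_max_iff_disj)
    qed
  qed
qed

definition phiF :: "real \<Rightarrow> (real \<Rightarrow> real) \<Rightarrow> real \<Rightarrow> real" where
  "phiF \<sigma> w z = z / 2 * (1 + (w z + \<sigma>)\<^sup>2)"
definition fF :: "real \<Rightarrow> (real \<Rightarrow> real) \<Rightarrow> (real \<Rightarrow> real) \<Rightarrow> real \<Rightarrow> real" where
  "fF \<sigma> v w s = (1 + (w s + \<sigma>)\<^sup>2) / (v s + \<sigma> * s) * (s / 2)"
definition gF :: "real \<Rightarrow> (real \<Rightarrow> real) \<Rightarrow> (real \<Rightarrow> real) \<Rightarrow> real \<Rightarrow> real \<Rightarrow> real" where
  "gF \<sigma> v w t s = fF \<sigma> v w s * exp (- integral {t..s} (phiF \<sigma> w))"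
definition HF :: "real \<Rightarrow> (real \<Rightarrow> real) \<Rightarrow> (real \<Rightarrow> real) \<Rightarrow> real \<Rightarrow> real" where
  "HF \<sigma> v w t = integral {t..} (gF \<sigma> v w t)"

lemma half_int: "a \<le> c \<Longrightarrow> ((\<lambda>z::real. z / 2) has_integral (c^2 - a^2)/4) {a..c}"
proof -
  assume "a \<le> c"
  then have "((\<lambda>z::real. z / 2) has_integral (c^2/4 - a^2/4)) {a..c}"
    apply (intro fundamental_theorem_of_calculus)
     apply simp
    apply (simp flip: has_real_derivative_iff_has_vector_derivative)
    apply (rule derivative_eq_intros refl | simp)+
    done
  then show ?thesis by (simp add: diff_divide_distrib)
qed

locale setting =
  fixes \<sigma> b K :: real and v w :: "real \<Rightarrow> real"
  assumes sig: "\<sigma> > 0" and b1: "b \<ge> 1" and K0: "K \<ge> 0"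
    and cv: "continuous_on {b..} v" and cw: "continuous_on {b..} w"
    and vpos: "\<And>x. x \<ge> b \<Longrightarrow> v x > 0"
    and wb: "\<And>x. x \<ge> b \<Longrightarrow> \<bar>w x\<bar> \<le> K / x\<^sup>2"
begin

definition "L = K + \<sigma>"
definition "M = 1 + L\<^sup>2"
definition "Phi s = integral {b..s} (phiF \<sigma> w)"
definition "P s = fF \<sigma> v w s * exp (- Phi s)"

lemma b0: "b > 0" using b1 by simp

lemma wK: "x \<ge> b \<Longrightarrow> \<bar>w x\<bar> \<le> K"
proof -
  assume x: "x \<ge> b"
  have "x\<^sup>2 \<ge> 1" using x b1 by (simp add: one_le_power)
  then have "K / x\<^sup>2 \<le> K" using K0 by (simp add: divide_le_eq mult_le_cancel_left1)
  with wb[OF x] show ?thesis by simp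
qed

lemma wL: "x \<ge> b \<Longrightarrow> \<bar>w x + \<sigma>\<bar> \<le> L"
  using wK[of x] sig unfolding L_def by linarith

lemma wsq: "x \<ge> b \<Longrightarrow> (w x + \<sigma>)\<^sup>2 \<le> L\<^sup>2"
  using wL[of x] by (metis abs_ge_zero power2_abs power_mono)

lemma L0: "L > 0" unfolding L_def using sig K0 by simp
lemma M1: "M \<ge> 1" unfolding M_def by simp

lemma phi_cont: "continuous_on {b..} (phiF \<sigma> w)"
  unfolding phiF_def by (intro continuous_intros cw) auto

lemma phi_ge: "z \<ge> b \<Longrightarrow> phiF \<sigma> w z \<ge> z / 2"
  unfolding phiF_def using b0 by (simp add: mult_le_cancel_left1)

lemma phi_int: "b \<le> t \<Longrightarrow> phiF \<sigma> w integrable_on {t..s}"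
  by (rule integrable_continuous_interval) (auto intro: continuous_on_subset[OF phi_cont])

lemma I_ge: "b \<le> t \<Longrightarrow> t \<le> s \<Longrightarrow> integral {t..s} (phiF \<sigma> w) \<ge> (s^2 - t^2)/4"
proof -
  assume t: "b \<le> t" "t \<le> s"
  have "integral {t..s} (\<lambda>z. z/2) \<le> integral {t..s} (phiF \<sigma> w)"
    by (rule integral_le) (use half_int[OF t(2)] phi_int[OF t(1)] phi_ge t in auto)
  then show ?thesis using half_int[OF t(2)] integral_unique by metis
qed

lemma E_le: "b \<le> t \<Longrightarrow> t \<le> s \<Longrightarrow> exp (- integral {t..s} (phiF \<sigma> w)) \<le> exp (-(s^2-t^2)/4)"
  by (subst exp_le_cancel_iff) (use I_ge[of t s] in linarith)

lemma f_nonneg: "s \<ge> b \<Longrightarrow> fF \<sigma> v w s \<ge> 0"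
  unfolding fF_def using vpos[of s] sig b0 by (auto intro!: mult_nonneg_nonneg divide_nonneg_pos)

lemma f_le: "s \<ge> b \<Longrightarrow> fF \<sigma> v w s \<le> M / (2*\<sigma>)"
proof -
  assume s: "s \<ge> b"
  have den: "v s + \<sigma> * s \<ge> \<sigma> * s" "\<sigma> * s > 0" using vpos[OF s] sig b0 s by auto
  have num: "1 + (w s + \<sigma>)\<^sup>2 \<le> M" using wsq[OF s] unfolding M_def by simp
  have "fF \<sigma> v w s = (1 + (w s + \<sigma>)\<^sup>2) / (v s + \<sigma> * s) * (s / 2)" by (simp add: fF_def)
  also have "\<dots> \<le> M / (\<sigma> * s) * (s / 2)"
    using den num s b0 M1 by (intro mult_right_mono frac_le) auto
  also have "\<dots> = M / (2*\<sigma>)" using s b0 by (simp add: field_simps)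
  finally show ?thesis .
qed

lemma den_pos: "x \<ge> b \<Longrightarrow> v x + \<sigma> * x > 0"
  using vpos[of x] sig b0 by (simp add: add_pos_pos)

lemma f_cont: "continuous_on {b..} (fF \<sigma> v w)"
proof -
  have "continuous_on {b..} (\<lambda>s. (1 + (w s + \<sigma>)\<^sup>2) / (v s + \<sigma> * s) * (s / 2))"
    apply (intro continuous_intros cw cv)
    using den_pos by (auto simp: less_imp_neq[symmetric])
  then show ?thesis unfolding fF_def by simp
qed


lemma Phi_cont: "continuous_on {b..} Phi"
  unfolding Phi_def[abs_def] by (rule indef_cont[OF phi_cont])

lemma I_split: "b \<le> t \<Longrightarrow> t \<le> s \<Longrightarrow> integral {t..s} (phiF \<sigma> w) = Phi s - Phi t"
  unfolding Phi_def using Henstock_Kurzweil_Integration.integral_combine[where a=b and c=t and b=s and f="phiF \<sigma> w"] phi_int[of b s] by simp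

lemma g_eq: "b \<le> t \<Longrightarrow> t \<le> s \<Longrightarrow> gF \<sigma> v w t s = exp (Phi t) * P s"
  unfolding gF_def P_def by (simp add: I_split exp_diff exp_minus field_simps)

lemma P_cont: "continuous_on {b..} P"
  unfolding P_def[abs_def] by (intro continuous_intros f_cont Phi_cont)

lemma g_nonneg: "b \<le> t \<Longrightarrow> t \<le> s \<Longrightarrow> gF \<sigma> v w t s \<ge> 0"
  unfolding gF_def using f_nonneg[of s] by simp

lemma g_le: "b \<le> t \<Longrightarrow> t \<le> s \<Longrightarrow> gF \<sigma> v w t s \<le> M / (2*\<sigma>*t) * (s * exp (-(s^2-t^2)/4))"
proof -
  assume t: "b \<le> t" "t \<le> s"
  have "gF \<sigma> v w t s \<le> M / (2*\<sigma>) * exp (-(s^2-t^2)/4)"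
    unfolding gF_def using f_le[of s] f_nonneg[of s] E_le[OF t] t
    by (intro mult_mono) auto
  also have "\<dots> \<le> M / (2*\<sigma>) * ((s/t) * exp (-(s^2-t^2)/4))"
  proof -
    have "1 \<le> s/t" using t b0 by simp
    then have "exp (-(s^2-t^2)/4) \<le> (s/t) * exp (-(s^2-t^2)/4)"
      using mult_right_mono[of 1 "s/t" "exp (-(s^2-t^2)/4)"] by simp
    then show ?thesis using M1 sig by (intro mult_left_mono) auto
  qed
  also have "\<dots> = M / (2*\<sigma>*t) * (s * exp (-(s^2-t^2)/4))" by simp
  finally show ?thesis .
qed

lemma maj_int: "t \<ge> b \<Longrightarrow> ((\<lambda>s. M / (2*\<sigma>*t) * (s * exp (-(s^2-t^2)/4))) has_integral M / (\<sigma>*t)) {t..}"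
  using has_integral_mult_right[OF gauss1[of t], of "M / (2*\<sigma>*t)"] b0 by simp

lemma g_cont: "t \<ge> b \<Longrightarrow> continuous_on {t..} (gF \<sigma> v w t)"
proof -
  assume t: "t \<ge> b"
  have "continuous_on {t..} (\<lambda>s. exp (Phi t) * P s)"
    by (intro continuous_intros continuous_on_subset[OF P_cont]) (use t in auto)
  then show ?thesis by (rule continuous_on_eq) (use t g_eq in auto)
qed

lemma g_int: "t \<ge> b \<Longrightarrow> gF \<sigma> v w t integrable_on {t..}"
  by (rule int_bound_Ici[OF g_cont]) (use maj_int g_le g_nonneg in auto)

lemma H_nonneg: "t \<ge> b \<Longrightarrow> HF \<sigma> v w t \<ge> 0"
  unfolding HF_def by (rule integral_nonneg[OF g_int]) (auto intro: g_nonneg)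

lemma H_le: "t \<ge> b \<Longrightarrow> HF \<sigma> v w t \<le> M / (\<sigma>*t)"
proof -
  assume t: "t \<ge> b"
  have "HF \<sigma> v w t \<le> integral {t..} (\<lambda>s. M / (2*\<sigma>*t) * (s * exp (-(s^2-t^2)/4)))"
    unfolding HF_def by (rule integral_le[OF g_int]) (use t maj_int g_le in auto)
  then show ?thesis using maj_int[OF t] integral_unique by metis
qed

lemma P_int: "t \<ge> b \<Longrightarrow> P integrable_on {t..}"
proof -
  assume t: "t \<ge> b"
  have "(\<lambda>s. exp (- Phi t) * gF \<sigma> v w t s) integrable_on {t..}"
    by (intro integrable_on_mult_right g_int t)
  then show ?thesis
    by (rule iffD1[OF integrable_cong, rotated]) (use t in \<open>auto simp: g_eq exp_minus field_simps\<close>)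
qed

lemma H_eq: "t \<ge> b \<Longrightarrow> HF \<sigma> v w t = exp (Phi t) * (integral {b..} P - integral {b..t} P)"
proof -
  assume t: "t \<ge> b"
  have "HF \<sigma> v w t = integral {t..} (\<lambda>s. exp (Phi t) * P s)"
    unfolding HF_def by (rule integral_cong) (use t g_eq in auto)
  also have "\<dots> = exp (Phi t) * integral {t..} P" by simp
  also have "integral {t..} P = integral {b..} P - integral {b..t} P"
    by (rule split_Ici[OF P_int[OF order_refl] P_int[OF t] t])
  finally show ?thesis .
qed

lemma H_cont: "continuous_on {b..} (HF \<sigma> v w)"
proof -
  have "continuous_on {b..} (\<lambda>t. exp (Phi t) * (integral {b..} P - integral {b..t} P))"
    by (intro continuous_intros Phi_cont indef_cont P_cont)
  then show ?thesis by (rule continuous_on_eq) (use H_eq in auto)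
qed

lemma Gc: "continuous_on {b..} (\<lambda>t. 1 / t\<^sup>2 * HF \<sigma> v w t)"
  by (intro continuous_intros H_cont) (use b0 in auto)

lemma Gb: "t \<ge> b \<Longrightarrow> \<bar>1 / t\<^sup>2 * HF \<sigma> v w t\<bar> \<le> (M/\<sigma>) / t^3"
proof -
  assume t: "t \<ge> b"
  have "\<bar>1 / t\<^sup>2 * HF \<sigma> v w t\<bar> = 1 / t\<^sup>2 * HF \<sigma> v w t" using H_nonneg[OF t] by simp
  also have "\<dots> \<le> 1 / t\<^sup>2 * (M / (\<sigma>*t))" using H_le[OF t] by (intro mult_left_mono) auto
  also have "\<dots> = (M/\<sigma>) / t^3"
  proof -
    have "t^3 = t\<^sup>2 * t" by (simp add: power2_eq_square power3_eq_cube)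
    then show ?thesis by simp
  qed
  finally show ?thesis .
qed

end


lemma outer_T:
  fixes G :: "real \<Rightarrow> real" and b B c :: real
  assumes b: "b > 0" and G: "continuous_on {b..} G" and GB: "\<And>t. t \<ge> b \<Longrightarrow> \<bar>G t\<bar> \<le> B / t^3"
    and B0: "B \<ge> 0"
  shows outer_T_der: "\<And>x. x \<ge> b \<Longrightarrow> ((\<lambda>x. c * x * integral {x..} G) has_vector_derivative
             c * (integral {x..} G - x * G x)) (at x within {b..})"
    and outer_T_dv: "\<And>x. x \<ge> b \<Longrightarrow> dv b (\<lambda>x. c * x * integral {x..} G) x = c * (integral {x..} G - x * G x)"
    and outer_T_C1: "C1_0 b (\<lambda>x. c * x * integral {x..} G)"
proof -
  note oo = outer[OF b G, OF GB, simplified]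
  show der: "((\<lambda>x. c * x * integral {x..} G) has_vector_derivative
             c * (integral {x..} G - x * G x)) (at x within {b..})" if "x \<ge> b" for x
    unfolding has_real_derivative_iff_has_vector_derivative[symmetric]
    apply (rule derivative_eq_intros refl oo(3)[OF that])+
    apply (simp add: algebra_simps)
    done
  show dv: "dv b (\<lambda>x. c * x * integral {x..} G) x = c * (integral {x..} G - x * G x)" if "x \<ge> b" for x
    unfolding dv_def by (rule vector_derivative_within[OF at_Ici_neq_bot[OF that] der[OF that]])
  show "C1_0 b (\<lambda>x. c * x * integral {x..} G)"
    unfolding C1_0_def
  proof (intro conjI allI impI)
    show "(\<lambda>x. c * x * integral {x..} G) differentiable at x within {b..}" if "b \<le> x" for x
      using der[OF that] by (rule differentiableI_vector)
    have "continuous_on {b..} (\<lambda>x. c * (integral {x..} G - x * G x))"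
      by (intro continuous_intros oo(4) G)
    then show "continuous_on {b..} (dv b (\<lambda>x. c * x * integral {x..} G))"
      by (rule continuous_on_eq) (use dv in auto)
    show "((\<lambda>x. c * x * integral {x..} G) \<longlongrightarrow> 0) at_top"
    proof (rule Lim_null_comparison)
      show "\<forall>\<^sub>F x in at_top. norm (c * x * integral {x..} G) \<le> \<bar>c\<bar> * B / (2 * x)"
        unfolding eventually_at_top_linorder
      proof (intro exI[of _ b] allI impI)
        fix x assume x: "x \<ge> b"
        have "norm (c * x * integral {x..} G) = \<bar>c\<bar> * x * \<bar>integral {x..} G\<bar>"
          using x b by (simp add: abs_mult)
        also have "\<dots> \<le> \<bar>c\<bar> * x * (B / (2*x^2))"
          using oo(2)[OF x] x b by (intro mult_left_mono) auto
        also have "\<dots> = \<bar>c\<bar> * B / (2 * x)" using x b by (simp add: power2_eq_square)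
        finally show "norm (c * x * integral {x..} G) \<le> \<bar>c\<bar> * B / (2 * x)" .
      qed
      show "((\<lambda>x. \<bar>c\<bar> * B / (2 * x)) \<longlongrightarrow> 0) at_top" by real_asymp
    qed
    show "(dv b (\<lambda>x. c * x * integral {x..} G) \<longlongrightarrow> 0) at_top"
    proof (rule Lim_null_comparison)
      show "\<forall>\<^sub>F x in at_top. norm (dv b (\<lambda>x. c * x * integral {x..} G) x) \<le> \<bar>c\<bar> * (3 * B / 2) / x^2"
        unfolding eventually_at_top_linorder
      proof (intro exI[of _ b] allI impI)
        fix x assume x: "x \<ge> b"
        have "norm (dv b (\<lambda>x. c * x * integral {x..} G) x) = \<bar>c\<bar> * \<bar>integral {x..} G - x * G x\<bar>"
          using dv[OF x] by (simp add: abs_mult)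
        also have "\<dots> \<le> \<bar>c\<bar> * (B / (2*x^2) + B / x^2)"
        proof (intro mult_left_mono)
          have "\<bar>x * G x\<bar> \<le> x * (B / x^3)" using mult_left_mono[OF GB[OF x], of x] x b by (simp add: abs_mult)
          also have "\<dots> = B / x^2" using x b by (simp add: power2_eq_square power3_eq_cube)
          finally show "\<bar>integral {x..} G - x * G x\<bar> \<le> B / (2*x^2) + B / x^2"
            using oo(2)[OF x] by linarith
        qed auto
        also have "\<dots> = \<bar>c\<bar> * (3 * B / 2) / x^2" by (simp add: field_simps)
        finally show "norm (dv b (\<lambda>x. c * x * integral {x..} G) x) \<le> \<bar>c\<bar> * (3 * B / 2) / x^2" .
      qed
      show "((\<lambda>x. \<bar>c\<bar> * (3 * B / 2) / x^2) \<longlongrightarrow> 0) at_top" by real_asymp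
    qed
  qed
qed



lemma exp_diff_le1:
  fixes a d c :: real
  assumes "c \<le> a" "a \<le> d"
  shows "\<bar>exp (-a) - exp (-d)\<bar> \<le> \<bar>a - d\<bar> * exp (-c)"
proof -
  have "exp (-d) = exp (-a) * exp (-(d-a))" by (simp flip: exp_add)
  moreover have "1 - exp (-(d-a)) \<le> d - a" using exp_ge_add_one_self[of "-(d-a)"] by linarith
  moreover have "exp (-(d-a)) \<le> 1" using assms by simp
  ultimately have "\<bar>exp (-a) - exp (-d)\<bar> = exp (-a) * (1 - exp (-(d-a)))"
    by (simp add: algebra_simps)
  also have "\<dots> \<le> exp (-a) * (d - a)"
    using \<open>1 - exp (-(d-a)) \<le> d - a\<close> by (intro mult_left_mono) auto
  also have "\<dots> \<le> exp (-c) * (d - a)" using assms by (intro mult_right_mono) auto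
  finally show ?thesis using assms by (simp add: mult.commute)
qed

lemma exp_diff_le:
  fixes a d c :: real
  assumes "c \<le> a" "c \<le> d"
  shows "\<bar>exp (-a) - exp (-d)\<bar> \<le> \<bar>a - d\<bar> * exp (-c)"
proof (cases "a \<le> d")
  case True then show ?thesis using exp_diff_le1[OF assms(1) True] by simp
next
  case False then show ?thesis using exp_diff_le1[OF assms(2), of a] by (simp add: abs_minus_commute)
qed

lemma sq_diff_le:
  fixes a c \<sigma> L D :: real
  assumes "\<bar>a + \<sigma>\<bar> \<le> L" "\<bar>c + \<sigma>\<bar> \<le> L" "\<bar>a - c\<bar> \<le> D"
  shows "\<bar>(a + \<sigma>)\<^sup>2 - (c + \<sigma>)\<^sup>2\<bar> \<le> 2 * L * D"
proof -
  have "\<bar>(a + \<sigma>)\<^sup>2 - (c + \<sigma>)\<^sup>2\<bar> = \<bar>a - c\<bar> * \<bar>(a + \<sigma>) + (c + \<sigma>)\<bar>"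
    by (simp add: power2_eq_square algebra_simps flip: abs_mult)
  also have "\<dots> \<le> D * (2 * L)"
    using assms by (intro mult_mono) auto
  finally show ?thesis by (simp add: algebra_simps)
qed


lemma f_lip:
  assumes S1: "setting \<sigma> b K v1 w1" and S2: "setting \<sigma> b K v2 w2"
    and D0: "\<bar>v2 s - v1 s\<bar> \<le> D0" and D1: "\<bar>w2 s - w1 s\<bar> \<le> D1" and s: "s \<ge> b"
  shows "\<bar>fF \<sigma> v2 w2 s - fF \<sigma> v1 w1 s\<bar> \<le> (K+\<sigma>) * D1 / \<sigma> + (1 + (K+\<sigma>)\<^sup>2) * D0 / (2 * \<sigma>\<^sup>2)"
proof -
  interpret s1: setting \<sigma> b K v1 w1 by fact
  interpret s2: setting \<sigma> b K v2 w2 by fact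
  define L where "L = K + \<sigma>"
  define M where "M = 1 + L\<^sup>2"
  define a1 where "a1 = 1 + (w1 s + \<sigma>)\<^sup>2"
  define a2 where "a2 = 1 + (w2 s + \<sigma>)\<^sup>2"
  define c1 where "c1 = v1 s + \<sigma> * s"
  define c2 where "c2 = v2 s + \<sigma> * s"
  have sp: "s > 0" "s \<ge> 1" using s s1.b1 by auto
  have c1: "c1 \<ge> \<sigma> * s" "c1 > 0" using s1.den_pos[OF s] s1.vpos[OF s] unfolding c1_def by auto
  have c2: "c2 \<ge> \<sigma> * s" "c2 > 0" using s2.den_pos[OF s] s2.vpos[OF s] unfolding c2_def by auto
  have a1: "0 \<le> a1" "a1 \<le> M" using s1.wsq[OF s] unfolding a1_def M_def L_def s1.L_def by auto
  have da: "\<bar>a2 - a1\<bar> \<le> 2 * L * D1"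
    unfolding a1_def a2_def L_def using sq_diff_le[OF s2.wL[OF s] s1.wL[OF s] D1] s1.L_def by simp
  have dc: "\<bar>c1 - c2\<bar> \<le> D0" unfolding c1_def c2_def using D0 by simp
  have sig: "\<sigma> > 0" by (rule s1.sig)
  have eq: "fF \<sigma> v2 w2 s - fF \<sigma> v1 w1 s = (s/2) * ((a2 - a1) / c2) + (s/2) * (a1 * (c1 - c2) / (c1 * c2))"
    unfolding fF_def a1_def[symmetric] a2_def[symmetric] c1_def[symmetric] c2_def[symmetric]
    using c1 c2 by (simp add: field_simps)
  have t1: "\<bar>(s/2) * ((a2 - a1) / c2)\<bar> \<le> L * D1 / \<sigma>"
  proof -
    have "\<bar>(s/2) * ((a2 - a1) / c2)\<bar> = (s/2) * \<bar>a2 - a1\<bar> / c2" using sp c2 by (simp add: abs_mult)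
    also have "\<dots> \<le> (s/2) * (2 * L * D1) / (\<sigma> * s)"
      using sp c2 da sig by (intro frac_le mult_left_mono) auto
    also have "\<dots> = L * D1 / \<sigma>" using sp sig by (simp add: field_simps)
    finally show ?thesis .
  qed
  have t2: "\<bar>(s/2) * (a1 * (c1 - c2) / (c1 * c2))\<bar> \<le> M * D0 / (2 * \<sigma>\<^sup>2)"
  proof -
    have cc: "c1 * c2 \<ge> (\<sigma> * s) * (\<sigma> * s)" using c1 c2 sig sp by (intro mult_mono) auto
    have "\<bar>(s/2) * (a1 * (c1 - c2) / (c1 * c2))\<bar> = (s/2) * (a1 * \<bar>c1 - c2\<bar>) / (c1 * c2)"
      using sp c1 c2 a1 by (simp add: abs_mult)
    also have "\<dots> \<le> (s/2) * (M * D0) / ((\<sigma> * s) * (\<sigma> * s))"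
      using sp c1 c2 a1 dc sig cc by (intro frac_le mult_left_mono mult_mono) auto
    also have "\<dots> = M * D0 / (2 * \<sigma>\<^sup>2) / s" using sp sig by (simp add: field_simps power2_eq_square)
    also have "\<dots> \<le> M * D0 / (2 * \<sigma>\<^sup>2)"
    proof -
      have "0 \<le> M * D0 / (2 * \<sigma>\<^sup>2)" using dc sig unfolding M_def by (intro divide_nonneg_pos mult_nonneg_nonneg) auto
      then show ?thesis using sp divide_left_mono[of 1 s "M * D0 / (2 * \<sigma>\<^sup>2)"] by simp
    qed
    finally show ?thesis .
  qed
  show ?thesis using eq t1 t2 unfolding L_def M_def by (smt (verit))
qed

lemma I_lip:
  assumes S1: "setting \<sigma> b K v1 w1" and S2: "setting \<sigma> b K v2 w2"
    and D1: "\<And>s. s \<ge> b \<Longrightarrow> \<bar>w2 s - w1 s\<bar> \<le> D1" and t: "b \<le> t" "t \<le> s"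
  shows "\<bar>integral {t..s} (phiF \<sigma> w2) - integral {t..s} (phiF \<sigma> w1)\<bar> \<le> (K+\<sigma>) * D1 * (s^2 - t^2) / 2"
proof -
  interpret s1: setting \<sigma> b K v1 w1 by fact
  interpret s2: setting \<sigma> b K v2 w2 by fact
  have "\<bar>integral {t..s} (phiF \<sigma> w2) - integral {t..s} (phiF \<sigma> w1)\<bar>
      = norm (integral {t..s} (\<lambda>z. phiF \<sigma> w2 z - phiF \<sigma> w1 z))"
    using integral_diff[OF s2.phi_int[OF t(1)] s1.phi_int[OF t(1)]] by simp
  also have "\<dots> \<le> integral {t..s} (\<lambda>z. (2 * (K+\<sigma>) * D1) * (z / 2))"
  proof (rule integral_norm_bound_integral)
    show "(\<lambda>z. phiF \<sigma> w2 z - phiF \<sigma> w1 z) integrable_on {t..s}"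
      by (intro integrable_diff s2.phi_int s1.phi_int t)
    show "(\<lambda>z. 2 * (K + \<sigma>) * D1 * (z / 2)) integrable_on {t..s}"
      by (intro integrable_continuous_interval continuous_intros) auto
    fix z assume z: "z \<in> {t..s}"
    then have zb: "z \<ge> b" "z > 0" using t s1.b0 by auto
    have "norm (phiF \<sigma> w2 z - phiF \<sigma> w1 z) = (z/2) * \<bar>(w2 z + \<sigma>)\<^sup>2 - (w1 z + \<sigma>)\<^sup>2\<bar>"
    proof -
      have eq: "phiF \<sigma> w2 z - phiF \<sigma> w1 z = (z/2) * ((w2 z + \<sigma>)\<^sup>2 - (w1 z + \<sigma>)\<^sup>2)"
        unfolding phiF_def by (simp add: algebra_simps)
      show ?thesis unfolding real_norm_def eq abs_mult using zb by simp
    qed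
    also have "\<dots> \<le> (z/2) * (2 * (K+\<sigma>) * D1)"
      using sq_diff_le[OF s2.wL[OF zb(1)] s1.wL[OF zb(1)] D1[OF zb(1)]] zb s1.L_def
      by (intro mult_left_mono) auto
    finally show "norm (phiF \<sigma> w2 z - phiF \<sigma> w1 z) \<le> 2 * (K + \<sigma>) * D1 * (z / 2)" by (simp add: algebra_simps)
  qed
  also have "\<dots> = (2 * (K+\<sigma>) * D1) * ((s^2 - t^2)/4)"
    by (rule integral_unique[OF has_integral_mult_right[OF half_int[OF t(2)]]])
  also have "\<dots> = (K+\<sigma>) * D1 * (s^2 - t^2) / 2" by (simp add: field_simps)
  finally show ?thesis .
qed


lemma g_lip:
  assumes S1: "setting \<sigma> b K v1 w1" and S2: "setting \<sigma> b K v2 w2"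
    and D0: "\<And>s. s \<ge> b \<Longrightarrow> \<bar>v2 s - v1 s\<bar> \<le> D0"
    and D1: "\<And>s. s \<ge> b \<Longrightarrow> \<bar>w2 s - w1 s\<bar> \<le> D1" and t: "b \<le> t" "t \<le> s"
  shows "\<bar>gF \<sigma> v2 w2 t s - gF \<sigma> v1 w1 t s\<bar> \<le>
    (1/t) * (((K+\<sigma>) * D1 / \<sigma> + (1 + (K+\<sigma>)\<^sup>2) * D0 / (2 * \<sigma>\<^sup>2)) * (s * exp (-(s^2-t^2)/4))
     + ((1 + (K+\<sigma>)\<^sup>2) * (K+\<sigma>) * D1 / (4*\<sigma>)) * (s * (s^2-t^2) * exp (-(s^2-t^2)/4)))"
proof -
  interpret s1: setting \<sigma> b K v1 w1 by fact
  interpret s2: setting \<sigma> b K v2 w2 by fact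
  define A where "A = (K+\<sigma>) * D1 / \<sigma> + (1 + (K+\<sigma>)\<^sup>2) * D0 / (2 * \<sigma>\<^sup>2)"
  define Bc where "Bc = (1 + (K+\<sigma>)\<^sup>2) * (K+\<sigma>) * D1 / (4*\<sigma>)"
  define u where "u = s^2 - t^2"
  define e where "e = exp (-u/4)"
  define f1 where "f1 = fF \<sigma> v1 w1 s"
  define f2 where "f2 = fF \<sigma> v2 w2 s"
  define I1 where "I1 = integral {t..s} (phiF \<sigma> w1)"
  define I2 where "I2 = integral {t..s} (phiF \<sigma> w2)"
  have sb: "s \<ge> b" using t by simp
  have sig: "\<sigma> > 0" by (rule s1.sig)
  have tp: "t > 0" using t s1.b0 by simp
  have D00: "D0 \<ge> 0" using D0[of b] by (smt (verit) order_refl)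
  have D10: "D1 \<ge> 0" using D1[of b] by (smt (verit) order_refl)
  have K0: "K \<ge> 0" by (rule s1.K0)
  have u0: "u \<ge> 0" unfolding u_def using t tp by (simp add: power_mono)
  have A0: "A \<ge> 0" unfolding A_def using D00 D10 K0 sig by (intro add_nonneg_nonneg divide_nonneg_pos mult_nonneg_nonneg) auto
  have B0: "Bc \<ge> 0" unfolding Bc_def using D00 D10 K0 sig by (intro divide_nonneg_pos mult_nonneg_nonneg) auto
  have e0: "e > 0" unfolding e_def by simp
  have fl: "\<bar>f2 - f1\<bar> \<le> A" unfolding f1_def f2_def A_def
    by (rule f_lip[OF S1 S2 D0[OF sb] D1[OF sb] sb])
  have f1b: "0 \<le> f1" "f1 \<le> (1 + (K+\<sigma>)\<^sup>2) / (2*\<sigma>)"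
    unfolding f1_def using s1.f_nonneg[OF sb] s1.f_le[OF sb] unfolding s1.M_def s1.L_def by auto
  have E2: "exp (-I2) \<le> e" "exp (-I2) \<ge> 0" unfolding I2_def e_def u_def using s2.E_le[OF t] by auto
  have Id: "\<bar>I2 - I1\<bar> \<le> (K+\<sigma>) * D1 * u / 2" unfolding I1_def I2_def u_def
    by (rule I_lip[OF S1 S2 D1 t])
  have Ed: "\<bar>exp (-I2) - exp (-I1)\<bar> \<le> ((K+\<sigma>) * D1 * u / 2) * e"
  proof -
    have "\<bar>exp (-I2) - exp (-I1)\<bar> \<le> \<bar>I2 - I1\<bar> * exp (-(u/4))"
      by (rule exp_diff_le) (use s1.I_ge[OF t] s2.I_ge[OF t] in \<open>auto simp: I1_def I2_def u_def\<close>)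
    also have "\<dots> = \<bar>I2 - I1\<bar> * e" unfolding e_def by simp
    also have "\<dots> \<le> ((K+\<sigma>) * D1 * u / 2) * e" using Id e0 by (intro mult_right_mono) auto
    finally show ?thesis .
  qed
  have eq: "gF \<sigma> v2 w2 t s - gF \<sigma> v1 w1 t s = (f2 - f1) * exp (-I2) + f1 * (exp (-I2) - exp (-I1))"
    unfolding gF_def f1_def f2_def I1_def I2_def by (simp add: algebra_simps)
  have "\<bar>gF \<sigma> v2 w2 t s - gF \<sigma> v1 w1 t s\<bar> \<le> \<bar>f2 - f1\<bar> * exp (-I2) + f1 * \<bar>exp (-I2) - exp (-I1)\<bar>"
    unfolding eq using f1b E2 by (simp add: abs_mult abs_triangle_ineq[THEN order_trans])
  also have "\<dots> \<le> A * e + ((1 + (K+\<sigma>)\<^sup>2) / (2*\<sigma>)) * (((K+\<sigma>) * D1 * u / 2) * e)"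
    using fl E2 f1b Ed A0 by (intro add_mono mult_mono) auto
  also have "\<dots> = A * e + Bc * u * e" unfolding Bc_def by (simp add: field_simps)
  also have "\<dots> \<le> (s/t) * (A * e + Bc * u * e)"
  proof -
    have "1 \<le> s/t" using t tp by simp
    moreover have "A * e + Bc * u * e \<ge> 0" using A0 B0 u0 e0 by simp
    ultimately show ?thesis using mult_right_mono[of 1 "s/t" "A * e + Bc * u * e"] by simp
  qed
  also have "\<dots> = (1/t) * (A * (s * e) + Bc * (s * u * e))" by (simp add: field_simps)
  finally show ?thesis unfolding A_def Bc_def e_def u_def by simp
qed

definition CC :: "real \<Rightarrow> real \<Rightarrow> real" where
  "CC K \<sigma> = 2 * (K+\<sigma>) / \<sigma> + (1 + (K+\<sigma>)\<^sup>2) / \<sigma>\<^sup>2 + 2 * (1 + (K+\<sigma>)\<^sup>2) * (K+\<sigma>) / \<sigma>"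

lemma H_lip:
  assumes S1: "setting \<sigma> b K v1 w1" and S2: "setting \<sigma> b K v2 w2"
    and D0: "\<And>s. s \<ge> b \<Longrightarrow> \<bar>v2 s - v1 s\<bar> \<le> D0"
    and D1: "\<And>s. s \<ge> b \<Longrightarrow> \<bar>w2 s - w1 s\<bar> \<le> D1" and t: "b \<le> t"
  shows "\<bar>HF \<sigma> v2 w2 t - HF \<sigma> v1 w1 t\<bar> \<le> CC K \<sigma> * (D0 + D1) / t"
proof -
  interpret s1: setting \<sigma> b K v1 w1 by fact
  interpret s2: setting \<sigma> b K v2 w2 by fact
  define A where "A = (K+\<sigma>) * D1 / \<sigma> + (1 + (K+\<sigma>)\<^sup>2) * D0 / (2 * \<sigma>\<^sup>2)"
  define Bc where "Bc = (1 + (K+\<sigma>)\<^sup>2) * (K+\<sigma>) * D1 / (4*\<sigma>)"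
  define h where "h = (\<lambda>s. (1/t) * (A * (s * exp (-(s^2-t^2)/4)) + Bc * (s * (s^2-t^2) * exp (-(s^2-t^2)/4))))"
  have sig: "\<sigma> > 0" by (rule s1.sig)
  have tp: "t > 0" using t s1.b0 by simp
  have D00: "D0 \<ge> 0" using D0[of b] by (smt (verit) order_refl)
  have D10: "D1 \<ge> 0" using D1[of b] by (smt (verit) order_refl)
  have K0: "K \<ge> 0" by (rule s1.K0)
  have hi: "(h has_integral (1/t) * (A * 2 + Bc * 8)) {t..}"
    unfolding h_def
    by (intro has_integral_mult_right has_integral_add gauss1 gauss2) (use tp in auto)
  have "\<bar>HF \<sigma> v2 w2 t - HF \<sigma> v1 w1 t\<bar> = norm (integral {t..} (\<lambda>s. gF \<sigma> v2 w2 t s - gF \<sigma> v1 w1 t s))"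
    unfolding HF_def using integral_diff[OF s2.g_int[OF t] s1.g_int[OF t]] by simp
  also have "\<dots> \<le> integral {t..} h"
    apply (rule integral_norm_bound_integral)
    using integrable_diff[OF s2.g_int[OF t] s1.g_int[OF t]] apply simp
    using hi apply blast
    using g_lip[OF S1 S2 D0 D1 t] unfolding h_def A_def Bc_def by auto
  also have "\<dots> = (1/t) * (A * 2 + Bc * 8)" using hi by (rule integral_unique)
  also have "\<dots> \<le> CC K \<sigma> * (D0 + D1) / t"
  proof -
    have "A * 2 + Bc * 8 = (2 * (K+\<sigma>) / \<sigma> + 2 * (1 + (K+\<sigma>)\<^sup>2) * (K+\<sigma>) / \<sigma>) * D1 + ((1 + (K+\<sigma>)\<^sup>2) / \<sigma>\<^sup>2) * D0"
      unfolding A_def Bc_def using sig by (simp add: field_simps power2_eq_square)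
    also have "\<dots> \<le> CC K \<sigma> * (D0 + D1)"
    proof -
      have p1: "2 * (K+\<sigma>) / \<sigma> + 2 * (1 + (K+\<sigma>)\<^sup>2) * (K+\<sigma>) / \<sigma> \<ge> 0"
        using sig K0 by (intro add_nonneg_nonneg divide_nonneg_pos mult_nonneg_nonneg) auto
      have p2: "(1 + (K+\<sigma>)\<^sup>2) / \<sigma>\<^sup>2 \<ge> 0" by simp
      have "CC K \<sigma> * (D0 + D1) = (2 * (K+\<sigma>) / \<sigma> + 2 * (1 + (K+\<sigma>)\<^sup>2) * (K+\<sigma>) / \<sigma>) * (D0 + D1) + ((1 + (K+\<sigma>)\<^sup>2) / \<sigma>\<^sup>2) * (D0 + D1)"
        unfolding CC_def by (simp add: algebra_simps)
      moreover have "(2 * (K+\<sigma>) / \<sigma> + 2 * (1 + (K+\<sigma>)\<^sup>2) * (K+\<sigma>) / \<sigma>) * D1 \<le> (2 * (K+\<sigma>) / \<sigma> + 2 * (1 + (K+\<sigma>)\<^sup>2) * (K+\<sigma>) / \<sigma>) * (D0 + D1)"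
        using p1 D00 by (intro mult_left_mono) auto
      moreover have "((1 + (K+\<sigma>)\<^sup>2) / \<sigma>\<^sup>2) * D0 \<le> ((1 + (K+\<sigma>)\<^sup>2) / \<sigma>\<^sup>2) * (D0 + D1)"
        using p2 D10 by (intro mult_left_mono) auto
      ultimately show ?thesis by linarith
    qed
    finally have "A * 2 + Bc * 8 \<le> CC K \<sigma> * (D0 + D1)" .
    then show ?thesis using tp by (simp add: divide_right_mono)
  qed
  finally show ?thesis .
qed



lemma Top_eq: "Top n \<sigma> b v = (\<lambda>x. (2 * (real n - 1)) * x * integral {x..} (\<lambda>t. 1 / t\<^sup>2 * HF \<sigma> v (dv b v) t))"
  unfolding Top_def HF_def gF_def fF_def phiF_def[abs_def] by simp

lemma dv_diff:
  assumes x: "x \<ge> b" and d1: "u1 differentiable at x within {b..}" and d2: "u2 differentiable at x within {b..}"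
  shows "dv b (\<lambda>x. u2 x - u1 x) x = dv b u2 x - dv b u1 x"
proof -
  have "((\<lambda>x. u2 x - u1 x) has_vector_derivative (dv b u2 x - dv b u1 x)) (at x within {b..})"
    unfolding dv_def
    by (intro has_vector_derivative_diff vector_derivative_works[THEN iffD1] d1 d2)
  then show ?thesis unfolding dv_def[of b "\<lambda>x. u2 x - u1 x"]
    by (rule vector_derivative_within[OF at_Ici_neq_bot[OF x]])
qed

lemma Y_setting:
  assumes v: "v \<in> Yset n \<sigma> b" and n: "n \<ge> 2" and sig: "\<sigma> > 0" and b: "b \<ge> 1"
  shows "setting \<sigma> b (4 * (real n - 1) / \<sigma>) v (dv b v)"
proof
  from v have C: "C1_0 b v" and Y: "\<And>x. x \<ge> b \<Longrightarrow> v x > 0 \<and> \<bar>dv b v x\<bar> < 4 * (real n - 1) / (\<sigma> * x\<^sup>2)"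
    unfolding Yset_def by auto
  show "\<sigma> > 0" "b \<ge> 1" by fact+
  show "0 \<le> 4 * (real n - 1) / \<sigma>" using n sig by simp
  show "continuous_on {b..} v"
    using C unfolding C1_0_def
    by (auto simp: continuous_on_eq_continuous_within intro: differentiable_imp_continuous_within)
  show "continuous_on {b..} (dv b v)" using C unfolding C1_0_def by auto
  show "\<And>x. b \<le> x \<Longrightarrow> 0 < v x" using Y by auto
  show "\<bar>dv b v x\<bar> \<le> 4 * (real n - 1) / \<sigma> / x\<^sup>2" if "b \<le> x" for x
    using Y[OF that] by (simp add: field_simps)
qed


lemma contr:
  assumes S1: "setting \<sigma> b K v1 w1" and S2: "setting \<sigma> b K v2 w2"
    and D0: "\<And>s. s \<ge> b \<Longrightarrow> \<bar>v2 s - v1 s\<bar> \<le> D0"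
    and D1: "\<And>s. s \<ge> b \<Longrightarrow> \<bar>w2 s - w1 s\<bar> \<le> D1"
    and c: "c \<ge> 0" and Q: "c * CC K \<sigma> / b \<le> 1/4" and x: "x \<ge> b"
  defines "T1 \<equiv> (\<lambda>x. c * x * integral {x..} (\<lambda>t. 1 / t\<^sup>2 * HF \<sigma> v1 w1 t))"
    and "T2 \<equiv> (\<lambda>x. c * x * integral {x..} (\<lambda>t. 1 / t\<^sup>2 * HF \<sigma> v2 w2 t))"
  shows "\<bar>T2 x - T1 x\<bar> \<le> (D0 + D1) / 8"
    and "\<bar>dv b (\<lambda>x. T2 x - T1 x) x\<bar> \<le> 3 * (D0 + D1) / 8"
proof -
  interpret s1: setting \<sigma> b K v1 w1 by fact
  interpret s2: setting \<sigma> b K v2 w2 by fact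
  define G1 where "G1 = (\<lambda>t. 1 / t\<^sup>2 * HF \<sigma> v1 w1 t)"
  define G2 where "G2 = (\<lambda>t. 1 / t\<^sup>2 * HF \<sigma> v2 w2 t)"
  define C where "C = CC K \<sigma>"
  define \<Delta> where "\<Delta> = D0 + D1"
  have b0: "b > 0" by (rule s1.b0)
  have xp: "x > 0" using x b0 by simp
  have D00: "D0 \<ge> 0" using D0[of b] by (smt (verit) order_refl)
  have D10: "D1 \<ge> 0" using D1[of b] by (smt (verit) order_refl)
  have \<Delta>0: "\<Delta> \<ge> 0" unfolding \<Delta>_def using D00 D10 by simp
  have C0: "C \<ge> 0" unfolding C_def CC_def using s1.sig s1.K0 
    by (intro add_nonneg_nonneg divide_nonneg_pos mult_nonneg_nonneg) auto
  have o1: "\<And>t. t \<ge> b \<Longrightarrow> \<bar>G1 t\<bar> \<le> (s1.M / \<sigma>) / t^3" unfolding G1_def by (rule s1.Gb)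
  have o2: "\<And>t. t \<ge> b \<Longrightarrow> \<bar>G2 t\<bar> \<le> (s2.M / \<sigma>) / t^3" unfolding G2_def by (rule s2.Gb)
  have c1: "continuous_on {b..} G1" unfolding G1_def by (rule s1.Gc)
  have c2: "continuous_on {b..} G2" unfolding G2_def by (rule s2.Gc)
  have M1: "s1.M / \<sigma> \<ge> 0" "s2.M / \<sigma> \<ge> 0" using s1.M1 s2.M1 s1.sig by auto
  have dG: "\<bar>G2 t - G1 t\<bar> \<le> (C * \<Delta>) / t^3" if t: "t \<ge> b" for t
  proof -
    have tp: "t > 0" using t b0 by simp
    have "\<bar>G2 t - G1 t\<bar> = 1 / t\<^sup>2 * \<bar>HF \<sigma> v2 w2 t - HF \<sigma> v1 w1 t\<bar>"
      unfolding G1_def G2_def by (simp add: abs_mult flip: right_diff_distrib diff_divide_distrib)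
    also have "\<dots> \<le> 1 / t\<^sup>2 * (C * \<Delta> / t)"
      unfolding C_def \<Delta>_def using H_lip[OF S1 S2 D0 D1 t] by (intro mult_left_mono) auto
    also have "\<dots> = (C * \<Delta>) / t^3"
    proof -
      have "t^3 = t\<^sup>2 * t" by (simp add: power2_eq_square power3_eq_cube)
      then show ?thesis by simp
    qed
    finally show ?thesis .
  qed
  have cd: "continuous_on {b..} (\<lambda>t. G2 t - G1 t)" by (intro continuous_intros c1 c2)
  have CD0: "C * \<Delta> \<ge> 0" using C0 \<Delta>0 by simp
  have Fd: "integral {x..} G2 - integral {x..} G1 = integral {x..} (\<lambda>t. G2 t - G1 t)"
    using integral_diff[OF outer_int[OF b0 c2 o2 x] outer_int[OF b0 c1 o1 x]] by simp
  have Fb: "\<bar>integral {x..} G2 - integral {x..} G1\<bar> \<le> C * \<Delta> / (2 * x^2)"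
    unfolding Fd by (rule outer_bound[OF b0 cd dG x])
  have Q': "c * C * \<Delta> / x \<le> \<Delta> / 4"
  proof -
    have "c * C * \<Delta> / x \<le> c * C * \<Delta> / b"
      using x b0 c C0 \<Delta>0 by (intro divide_left_mono mult_nonneg_nonneg) auto
    also have "\<dots> = (c * C / b) * \<Delta>" by simp
    also have "\<dots> \<le> (1/4) * \<Delta>" using Q \<Delta>0 unfolding C_def by (intro mult_right_mono) auto
    finally show ?thesis by simp
  qed
  have T: "T2 x - T1 x = c * x * (integral {x..} G2 - integral {x..} G1)"
    unfolding T1_def T2_def G1_def G2_def by (simp add: algebra_simps)
  have "\<bar>T2 x - T1 x\<bar> = c * x * \<bar>integral {x..} G2 - integral {x..} G1\<bar>"
    unfolding T using c xp by (simp add: abs_mult)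
  also have "\<dots> \<le> c * x * (C * \<Delta> / (2 * x^2))" using Fb c xp by (intro mult_left_mono) auto
  also have "\<dots> = (c * C * \<Delta> / x) / 2" using xp by (simp add: power2_eq_square field_simps)
  also have "\<dots> \<le> (\<Delta> / 4) / 2" by (rule divide_right_mono[OF Q']) simp
  finally show "\<bar>T2 x - T1 x\<bar> \<le> (D0 + D1) / 8" unfolding \<Delta>_def by simp
  have der: "((\<lambda>x. T2 x - T1 x) has_vector_derivative
      c * (integral {x..} G2 - x * G2 x) - c * (integral {x..} G1 - x * G1 x)) (at x within {b..})"
    unfolding T1_def T2_def G1_def[symmetric] G2_def[symmetric]
    by (intro has_vector_derivative_diff outer_T_der[OF b0 c2 o2 M1(2) x] outer_T_der[OF b0 c1 o1 M1(1) x])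
  have "dv b (\<lambda>x. T2 x - T1 x) x = c * ((integral {x..} G2 - integral {x..} G1) - x * (G2 x - G1 x))"
    unfolding dv_def using vector_derivative_within[OF at_Ici_neq_bot[OF x] der] by (simp add: algebra_simps)
  then have "\<bar>dv b (\<lambda>x. T2 x - T1 x) x\<bar> = c * \<bar>(integral {x..} G2 - integral {x..} G1) - x * (G2 x - G1 x)\<bar>"
    using c by (simp add: abs_mult)
  also have "\<dots> \<le> c * (C * \<Delta> / (2 * x^2) + C * \<Delta> / x^2)"
  proof (intro mult_left_mono c)
    have "\<bar>x * (G2 x - G1 x)\<bar> \<le> x * ((C * \<Delta>) / x^3)"
      using mult_left_mono[OF dG[OF x], of x] xp by (simp add: abs_mult)
    also have "\<dots> = C * \<Delta> / x^2" using xp by (simp add: power2_eq_square power3_eq_cube)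
    finally show "\<bar>(integral {x..} G2 - integral {x..} G1) - x * (G2 x - G1 x)\<bar> \<le> C * \<Delta> / (2 * x^2) + C * \<Delta> / x^2"
      using Fb by linarith
  qed
  also have "\<dots> = (3/2) * (c * C * \<Delta> / x) / x" using xp by (simp add: power2_eq_square field_simps)
  also have "\<dots> \<le> (3/2) * (c * C * \<Delta> / x)"
  proof -
    have nn: "(3/2) * (c * C * \<Delta> / x) \<ge> 0" using c C0 \<Delta>0 xp by simp
    have "x \<ge> 1" using x s1.b1 by simp
    then have "(3/2) * (c * C * \<Delta> / x) / x \<le> (3/2) * (c * C * \<Delta> / x) / 1"
      by (intro divide_left_mono nn) auto
    then show ?thesis by simp
  qed
  also have "\<dots> \<le> (3/2) * (\<Delta> / 4)" by (rule mult_left_mono[OF Q']) simp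
  finally show "\<bar>dv b (\<lambda>x. T2 x - T1 x) x\<bar> \<le> 3 * (D0 + D1) / 8" unfolding \<Delta>_def by simp
qed


theorem proposition1:
  fixes n :: nat and \<sigma> :: real
  assumes "n \<ge> 2" and "\<sigma> > 0"
  shows "\<exists>b0>0. \<forall>b\<ge>b0.
     (\<forall>v\<in>Yset n \<sigma> b. C1_0 b (Top n \<sigma> b v)) \<and>
     (\<exists>\<tau>. 0 < \<tau> \<and> \<tau> < 1 \<and>
        (\<forall>v1\<in>Yset n \<sigma> b. \<forall>v2\<in>Yset n \<sigma> b.
           c1norm b (\<lambda>x. Top n \<sigma> b v2 x - Top n \<sigma> b v1 x)
             \<le> \<tau> * c1norm b (\<lambda>x. v2 x - v1 x)))"
proof -
  note n = assms(1) and sig = assms(2)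
  define c where "c = 2 * (real n - 1)"
  define K where "K = 4 * (real n - 1) / \<sigma>"
  define C where "C = CC K \<sigma>"
  define b0 where "b0 = max 1 (4 * c * C)"
  have c0: "c \<ge> 0" unfolding c_def using n by simp
  have K0: "K \<ge> 0" unfolding K_def using n sig by simp
  have C0: "C \<ge> 0" unfolding C_def CC_def using sig K0
    by (intro add_nonneg_nonneg divide_nonneg_pos mult_nonneg_nonneg) auto
  show ?thesis
  proof (rule exI[of _ b0], intro conjI allI impI)
    show "b0 > 0" unfolding b0_def by simp
    fix b assume b: "b \<ge> b0"
    have b1: "b \<ge> 1" using b unfolding b0_def by simp
    have Q: "c * C / b \<le> 1/4"
    proof -
      have "4 * c * C \<le> b" using b unfolding b0_def by simp
      then show ?thesis using b1 by (simp add: divide_le_eq)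
    qed
    have S: "setting \<sigma> b K v (dv b v)" if "v \<in> Yset n \<sigma> b" for v
      unfolding K_def by (rule Y_setting[OF that n sig b1])
    have TE: "Top n \<sigma> b v = (\<lambda>x. c * x * integral {x..} (\<lambda>t. 1 / t\<^sup>2 * HF \<sigma> v (dv b v) t))" for v
      unfolding c_def by (rule Top_eq)
    show "\<forall>v\<in>Yset n \<sigma> b. C1_0 b (Top n \<sigma> b v)"
    proof
      fix v assume v: "v \<in> Yset n \<sigma> b"
      interpret s: setting \<sigma> b K v "dv b v" by (rule S[OF v])
      show "C1_0 b (Top n \<sigma> b v)" unfolding TE
        using outer_T_C1[OF s.b0 s.Gc s.Gb] s.M1 sig by simp
    qed
    show "\<exists>\<tau>>0. \<tau> < 1 \<and> (\<forall>v1\<in>Yset n \<sigma> b. \<forall>v2\<in>Yset n \<sigma> b.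
           c1norm b (\<lambda>x. Top n \<sigma> b v2 x - Top n \<sigma> b v1 x) \<le> \<tau> * c1norm b (\<lambda>x. v2 x - v1 x))"
    proof (intro exI[of _ "1/2"] conjI ballI)
      fix v1 v2 assume v1: "v1 \<in> Yset n \<sigma> b" and v2: "v2 \<in> Yset n \<sigma> b"
      interpret s1: setting \<sigma> b K v1 "dv b v1" by (rule S[OF v1])
      interpret s2: setting \<sigma> b K v2 "dv b v2" by (rule S[OF v2])
      have C1: "C1_0 b v1" "C1_0 b v2" using v1 v2 unfolding Yset_def by auto
      obtain B1 where B1: "\<And>x. x \<ge> b \<Longrightarrow> \<bar>v1 x\<bar> \<le> B1"
        using bounded_Ici[OF s1.cv] C1(1) unfolding C1_0_def by blast
      obtain B2 where B2: "\<And>x. x \<ge> b \<Longrightarrow> \<bar>v2 x\<bar> \<le> B2"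
        using bounded_Ici[OF s2.cv] C1(2) unfolding C1_0_def by blast
      define D0 where "D0 = (SUP x\<in>{b..}. \<bar>v2 x - v1 x\<bar>)"
      define D1 where "D1 = (SUP x\<in>{b..}. \<bar>dv b (\<lambda>x. v2 x - v1 x) x\<bar>)"
      have dvd: "dv b (\<lambda>x. v2 x - v1 x) x = dv b v2 x - dv b v1 x" if "x \<ge> b" for x
        by (rule dv_diff[OF that]) (use C1 that in \<open>auto simp: C1_0_def\<close>)
      have hD0: "\<bar>v2 s - v1 s\<bar> \<le> D0" if "s \<ge> b" for s
        unfolding D0_def
      proof (rule cSUP_upper)
        show "s \<in> {b..}" using that by simp
        show "bdd_above ((\<lambda>x. \<bar>v2 x - v1 x\<bar>) ` {b..})"
        proof (rule bdd_aboveI2[of _ _ "B1 + B2"])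
          fix x assume "x \<in> {b..}"
          then show "\<bar>v2 x - v1 x\<bar> \<le> B1 + B2" using B1[of x] B2[of x] by auto
        qed
      qed
      have hD1': "\<bar>dv b (\<lambda>x. v2 x - v1 x) s\<bar> \<le> D1" if "s \<ge> b" for s
        unfolding D1_def
      proof (rule cSUP_upper)
        show "s \<in> {b..}" using that by simp
        show "bdd_above ((\<lambda>x. \<bar>dv b (\<lambda>x. v2 x - v1 x) x\<bar>) ` {b..})"
        proof (rule bdd_aboveI2[of _ _ "2 * K"])
          fix x assume "x \<in> {b..}"
          then show "\<bar>dv b (\<lambda>x. v2 x - v1 x) x\<bar> \<le> 2 * K"
            using dvd[of x] s1.wK[of x] s2.wK[of x] by auto
        qed
      qed
      have hD1: "\<bar>dv b v2 s - dv b v1 s\<bar> \<le> D1" if "s \<ge> b" for s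
        using hD1'[OF that] dvd[OF that] by simp
      note ct = contr[OF S[OF v1] S[OF v2] hD0 hD1 c0 Q[unfolded C_def]]
      have "c1norm b (\<lambda>x. Top n \<sigma> b v2 x - Top n \<sigma> b v1 x)
          = (SUP x\<in>{b..}. \<bar>Top n \<sigma> b v2 x - Top n \<sigma> b v1 x\<bar>)
            + (SUP x\<in>{b..}. \<bar>dv b (\<lambda>x. Top n \<sigma> b v2 x - Top n \<sigma> b v1 x) x\<bar>)"
        unfolding c1norm_def ..
      also have "\<dots> \<le> (D0 + D1) / 8 + 3 * (D0 + D1) / 8"
      proof (intro add_mono cSUP_least)
        fix x assume x: "x \<in> {b..}"
        show "\<bar>Top n \<sigma> b v2 x - Top n \<sigma> b v1 x\<bar> \<le> (D0 + D1) / 8"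
          unfolding TE using ct(1)[of x] x by simp
        show "\<bar>dv b (\<lambda>x. Top n \<sigma> b v2 x - Top n \<sigma> b v1 x) x\<bar> \<le> 3 * (D0 + D1) / 8"
          unfolding TE using ct(2)[of x] x by simp
      qed auto
      also have "\<dots> = 1/2 * c1norm b (\<lambda>x. v2 x - v1 x)"
        unfolding c1norm_def D0_def[symmetric] D1_def[symmetric] by (simp add: field_simps)
      finally show "c1norm b (\<lambda>x. Top n \<sigma> b v2 x - Top n \<sigma> b v1 x) \<le> 1/2 * c1norm b (\<lambda>x. v2 x - v1 x)" .
    qed auto
  qed
qed


end
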